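(* Let $\mathbf{x}\in\mathbb{C}^d$ be an arbitrary fixed vector and $\mathbf{b}=(b_1,\ldots,b_m)^\top\in\mathbb{C}^m$ a vector satisfying $\|\mathbf{b}\|_2\lesssim\sqrt{m}\,\|\mathbf{x}\|_2$. Let $\mathbf{a}_1,\ldots,\mathbf{a}_m\in\mathbb{C}^d$ be i.i.d. complex Gaussian random vectors and $y_j=|\mathbf{a}_j^*\mathbf{x}+b_j|^2$, $j=1,\ldots,m$. Then there is a universal constant $c>0$ such that with probability at least $1-4\exp(-cm)$, \[ R_0/3\le\|\mathbf{x}\|_2\le R_0,\qquad\text{where } R_0:=2\Big(\frac1m\sum_{j=1}^m y_j-\frac{\|\mathbf{b}\|_2^2}{m}\Big)^{1/2}. \]
   Context: A complex Gaussian random vector $\mathbf{a}\in\mathbb{C}^d$ means $\mathbf{a}\sim\frac{1}{\sqrt2}\mathcal{N}(0,I_d)+\frac{i}{\sqrt2}\mathcal{N}(0,I_d)$. $A\lesssim B$ means $A\le C_0B$ for an absolute constant $C_0>0$. *)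

theory Defs
  imports "HOL-Probability.Probability"
begin

text \<open>Vectors in C^d are represented as functions nat => complex, only indices < d matter.\<close>

definition std_gaussian :: "real measure" where
  "std_gaussian = density lborel std_normal_density"

definition real_gaussian_vector :: "nat \<Rightarrow> (nat \<Rightarrow> real) measure" where
  "real_gaussian_vector d = PiM {..<d} (\<lambda>_. std_gaussian)"

definition complex_gaussian_vector :: "nat \<Rightarrow> (nat \<Rightarrow> complex) measure" where
  "complex_gaussian_vector d =
     distr (real_gaussian_vector d \<Otimes>\<^sub>M real_gaussian_vector d) (PiM {..<d} (\<lambda>_. borel))
       (\<lambda>(u, v). \<lambda>k\<in>{..<d}. Complex (u k / sqrt 2) (v k / sqrt 2))"

definition gaussian_sample :: "nat \<Rightarrow> nat \<Rightarrow> (nat \<Rightarrow> nat \<Rightarrow> complex) measure" where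
  "gaussian_sample d m = PiM {..<m} (\<lambda>_. complex_gaussian_vector d)"

definition cnorm2 :: "nat \<Rightarrow> (nat \<Rightarrow> complex) \<Rightarrow> real" where
  "cnorm2 n v = sqrt (\<Sum>k<n. (cmod (v k))\<^sup>2)"

definition cinner :: "nat \<Rightarrow> (nat \<Rightarrow> complex) \<Rightarrow> (nat \<Rightarrow> complex) \<Rightarrow> complex" where
  "cinner d a x = (\<Sum>k<d. cnj (a k) * x k)"

definition R0 :: "nat \<Rightarrow> nat \<Rightarrow> (nat \<Rightarrow> complex) \<Rightarrow> (nat \<Rightarrow> complex) \<Rightarrow> (nat \<Rightarrow> nat \<Rightarrow> complex) \<Rightarrow> real" where
  "R0 d m x b a = 2 * sqrt ((1 / real m) * (\<Sum>j<m. (cmod (cinner d (a j) x + b j))\<^sup>2)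
                            - (cnorm2 m b)\<^sup>2 / real m)"

end

theory Submission
  imports Defs
begin

lemma sg_def': "std_gaussian = density lborel std_normal_density"
  by (simp add: std_gaussian_def)

lemma prob_space_sg: "prob_space std_gaussian"
  unfolding std_gaussian_def using prob_space_normal_density by simp

lemma sets_sg[simp, measurable_cong]: "sets std_gaussian = sets borel"
  by (simp add: std_gaussian_def)

lemma space_sg[simp]: "space std_gaussian = UNIV"
  by (simp add: std_gaussian_def)

lemma nn_integral_normal_density_one: "ta > 0 \<Longrightarrow> (\<integral>\<^sup>+x. ennreal (normal_density mu ta x) \<partial>lborel) = 1"
  by (subst nn_integral_eq_integral) (auto intro!: integrable_normal_density simp: integral_normal_density)

lemma gauss_quad:
  fixes s w bb :: real
  assumes A: "2 * s * w\<^sup>2 < 1"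
  shows "(\<integral>\<^sup>+z. ennreal (exp (s * ((w * z+bb)\<^sup>2 - bb\<^sup>2))) \<partial>std_gaussian)
     = ennreal (exp (2 * s\<^sup>2 * w\<^sup>2 * bb\<^sup>2/(1-2 * s * w\<^sup>2)) / sqrt (1-2 * s * w\<^sup>2))"
proof -
  define a where "a = 1-2 * s * w\<^sup>2"
  have a: "a > 0" using A by (simp add: a_def)
  define ta where "ta = 1 / sqrt a"
  define mu where "mu = 2 * s * w * bb/a"
  define C where "C = exp (2 * s\<^sup>2 * w\<^sup>2 * bb\<^sup>2/a) / sqrt a"
  have tau: "ta > 0" using a by (simp add: ta_def)
  have tau2: "ta\<^sup>2 = 1/a" using a by (simp add: ta_def power_divide)
  have pt: "std_normal_density z  *  exp (s * ((w * z+bb)\<^sup>2 - bb\<^sup>2)) = C  *  normal_density mu ta z" for z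
  proof -
    have m: "a * (z - mu)\<^sup>2 = (1 - 2 * s * w\<^sup>2) * z\<^sup>2 - 4 * s * w * bb * z + (2 * s * w * bb)\<^sup>2 / a"
      using a by (simp add: mu_def field_simps power2_eq_square) (simp add: a_def algebra_simps eval_nat_numeral)
    have m2: "-(z - mu)\<^sup>2/ (2 * ta\<^sup>2) = - (a * (z - mu)\<^sup>2) / 2"
      using a by (simp add: tau2)
    have e1: "- z\<^sup>2 / 2 + s * ((w * z + bb)\<^sup>2 - bb\<^sup>2) = 2 * s\<^sup>2 * w\<^sup>2 * bb\<^sup>2 / a - (a * (z - mu)\<^sup>2) / 2"
      apply (subst m) using a by (simp add: power2_eq_square field_simps)
    have e: "- z\<^sup>2 / 2 + s * ((w * z + bb)\<^sup>2 - bb\<^sup>2) = 2 * s\<^sup>2 * w\<^sup>2 * bb\<^sup>2 / a + (-(z - mu)\<^sup>2/ (2 * ta\<^sup>2))"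
      unfolding e1 m2 by simp
    have s: "sqrt (2  *  pi  *  ta\<^sup>2) = sqrt (2 * pi) / sqrt a"
      using a by (simp add: tau2 real_sqrt_divide)
    have "std_normal_density z * exp (s * ((w * z + bb)\<^sup>2 - bb\<^sup>2))
       = 1 / sqrt (2 * pi) * exp (- z\<^sup>2 / 2 + s * ((w * z + bb)\<^sup>2 - bb\<^sup>2))"
      by (simp add: std_normal_density_def exp_add[symmetric])
    also have "\<dots> = 1 / sqrt (2 * pi) * (exp (2 * s\<^sup>2 * w\<^sup>2 * bb\<^sup>2 / a) * exp (-(z - mu)\<^sup>2/ (2 * ta\<^sup>2)))"
      by (simp only: e exp_add)
    also have "\<dots> = C * normal_density mu ta z"
      unfolding normal_density_def C_def s using a by (simp add: field_simps)
    finally show ?thesis .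
  qed
  have "(\<integral>\<^sup>+z. ennreal (exp (s * ((w * z+bb)\<^sup>2 - bb\<^sup>2))) \<partial>std_gaussian)
      = (\<integral>\<^sup>+z. ennreal (std_normal_density z)  *  ennreal (exp (s * ((w * z+bb)\<^sup>2 - bb\<^sup>2))) \<partial>lborel)"
    unfolding std_gaussian_def by (subst nn_integral_density) auto
  also have "\<dots> = (\<integral>\<^sup>+z. ennreal C  *  ennreal (normal_density mu ta z) \<partial>lborel)"
    using a by (intro nn_integral_cong) (simp add: ennreal_mult[symmetric] pt C_def)
  also have "\<dots> = ennreal C"
    by (subst nn_integral_cmult) (auto simp: nn_integral_normal_density_one tau)
  finally show ?thesis by (simp add: C_def a_def)
qed

lemma ln_bound: fixes t :: real assumes "\<bar>t\<bar> \<le> 1/2" shows "- t - 2 * t\<^sup>2 \<le> ln (1 - t)"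
proof (cases "t \<ge> 0")
  case True then show ?thesis using assms ln_one_minus_pos_lower_bound[of t] by simp
next
  case False
  then have "(-t) - (-t)\<^sup>2 \<le> ln (1 + (-t))" using assms by (intro ln_one_plus_pos_lower_bound) auto
  then show ?thesis by (simp add: power2_eq_square) (smt (verit) zero_le_square)
qed

lemma gauss_quad_bound:
  fixes s w bb :: real
  assumes A: "\<bar>2 * s * w\<^sup>2\<bar> \<le> 1/2"
  shows "(\<integral>\<^sup>+z. ennreal (exp (s * ((w * z + bb)\<^sup>2 - bb\<^sup>2))) \<partial>std_gaussian)
     \<le> ennreal (exp (s * w\<^sup>2 + 4 * s\<^sup>2 * w^4 + 4 * s\<^sup>2 * w\<^sup>2 * bb\<^sup>2))"
proof -
  define t where "t = 2 * s * w\<^sup>2"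
  have t: "\<bar>t\<bar> \<le> 1/2" using A by (simp add: t_def)
  have a: "1 - t \<ge> 1/2" using t by simp
  have eq: "(\<integral>\<^sup>+z. ennreal (exp (s * ((w * z + bb)\<^sup>2 - bb\<^sup>2))) \<partial>std_gaussian)
     = ennreal (exp (2 * s\<^sup>2 * w\<^sup>2 * bb\<^sup>2 / (1 - t)) / sqrt (1 - t))"
    unfolding t_def by (rule gauss_quad) (use t in \<open>simp add: t_def\<close>)
  have sq: "sqrt (1 - t) = exp (ln (1 - t) / 2)"
    using a by (simp add: powr_half_sqrt[symmetric] powr_def)
  have l: "- t - 2 * t\<^sup>2 \<le> ln (1 - t)" by (rule ln_bound[OF t])
  have 1: "1 / sqrt (1 - t) \<le> exp (s * w\<^sup>2 + 4 * s\<^sup>2 * w^4)"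
  proof -
    have "1 / sqrt (1 - t) = exp (- ln (1 - t) / 2)" unfolding sq by (simp add: exp_minus field_simps)
    also have "\<dots> \<le> exp (t / 2 + t\<^sup>2)" using l by simp
    also have "t / 2 + t\<^sup>2 = s * w\<^sup>2 + 4 * s\<^sup>2 * w^4" by (simp add: t_def power2_eq_square eval_nat_numeral)
    finally show ?thesis .
  qed
  have 2: "2 * s\<^sup>2 * w\<^sup>2 * bb\<^sup>2 / (1 - t) \<le> 4 * s\<^sup>2 * w\<^sup>2 * bb\<^sup>2"
  proof -
    have nn: "0 \<le> 2 * s\<^sup>2 * w\<^sup>2 * bb\<^sup>2" by simp
    have "2 * s\<^sup>2 * w\<^sup>2 * bb\<^sup>2 / (1 - t) \<le> 2 * s\<^sup>2 * w\<^sup>2 * bb\<^sup>2 / (1/2)"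
      using a by (intro divide_left_mono[OF _ nn]) auto
    then show ?thesis by simp
  qed
  have "exp (2 * s\<^sup>2 * w\<^sup>2 * bb\<^sup>2 / (1 - t)) / sqrt (1 - t)
      = exp (2 * s\<^sup>2 * w\<^sup>2 * bb\<^sup>2 / (1 - t)) * (1 / sqrt (1 - t))" by simp
  also have "\<dots> \<le> exp (4 * s\<^sup>2 * w\<^sup>2 * bb\<^sup>2) * exp (s * w\<^sup>2 + 4 * s\<^sup>2 * w^4)"
    using 1 2 a by (intro mult_mono) auto
  also have "\<dots> = exp (s * w\<^sup>2 + 4 * s\<^sup>2 * w^4 + 4 * s\<^sup>2 * w\<^sup>2 * bb\<^sup>2)"
    by (simp add: exp_add[symmetric] algebra_simps)
  finally show ?thesis unfolding eq by (simp add: ennreal_leI)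
qed

definition gform :: "'a measure \<Rightarrow> ('a \<Rightarrow> real) \<Rightarrow> real \<Rightarrow> bool" where
  "gform M X s \<longleftrightarrow> (\<forall>g \<in> borel_measurable borel.
      (\<integral>\<^sup>+\<omega>. g (X \<omega>) \<partial>M) = (\<integral>\<^sup>+z. g (s * z) \<partial>std_gaussian))"

lemma gformD: "gform M X s \<Longrightarrow> g \<in> borel_measurable borel \<Longrightarrow>
   (\<integral>\<^sup>+\<omega>. g (X \<omega>) \<partial>M) = (\<integral>\<^sup>+z. g (s * z) \<partial>std_gaussian)"
  unfolding gform_def by blast

lemma gform_normal:
  assumes M: "prob_space M" and D: "distributed M lborel X (normal_density 0 s)" and s: "s > 0"
  shows "gform M X s"
  unfolding gform_def
proof
  fix g :: "real \<Rightarrow> ennreal" assume g[measurable]: "g \<in> borel_measurable borel"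
  have "(\<integral>\<^sup>+\<omega>. g (X \<omega>) \<partial>M) = (\<integral>\<^sup>+w. ennreal (normal_density 0 s w) * g w \<partial>lborel)"
    using distributed_nn_integral[OF D, of g] by simp
  also have "\<dots> = ennreal \<bar>s\<bar> * (\<integral>\<^sup>+z. ennreal (normal_density 0 s (0 + s * z)) * g (0 + s * z) \<partial>lborel)"
    by (rule nn_integral_real_affine) (use s in auto)
  also have "\<dots> = (\<integral>\<^sup>+z. ennreal (s * normal_density 0 s (s * z)) * g (s * z) \<partial>lborel)"
    using s by (subst nn_integral_cmult[symmetric]) (auto simp: ennreal_mult' mult.assoc)
  also have "\<dots> = (\<integral>\<^sup>+z. ennreal (std_normal_density z) * g (s * z) \<partial>lborel)"
  proof (intro nn_integral_cong)
    fix z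
    have "s * normal_density 0 s (s * z) = std_normal_density z"
      using s unfolding normal_density_def by (simp add: real_sqrt_mult power_mult_distrib field_simps)
    then show "ennreal (s * normal_density 0 s (s * z)) * g (s * z) = ennreal (std_normal_density z) * g (s * z)"
      by simp
  qed
  also have "\<dots> = (\<integral>\<^sup>+z. g (s * z) \<partial>std_gaussian)"
    unfolding std_gaussian_def by (subst nn_integral_density) auto
  finally show "(\<integral>\<^sup>+\<omega>. g (X \<omega>) \<partial>M) = (\<integral>\<^sup>+z. g (s * z) \<partial>std_gaussian)" .
qed

lemma gform_zero:
  assumes M: "prob_space M" and X: "\<And>\<omega>. \<omega> \<in> space M \<Longrightarrow> X \<omega> = 0"
  shows "gform M X 0"
  unfolding gform_def
proof
  fix g :: "real \<Rightarrow> ennreal" assume g[measurable]: "g \<in> borel_measurable borel"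
  interpret prob_space M by fact
  interpret S: prob_space std_gaussian by (rule prob_space_sg)
  have "(\<integral>\<^sup>+\<omega>. g (X \<omega>) \<partial>M) = (\<integral>\<^sup>+\<omega>. g 0 \<partial>M)"
    by (intro nn_integral_cong) (simp add: X)
  also have "\<dots> = g 0" by (simp add: emeasure_space_1)
  also have "\<dots> = (\<integral>\<^sup>+z. g (0 * z) \<partial>std_gaussian)" using S.emeasure_space_1 by simp
  finally show "(\<integral>\<^sup>+\<omega>. g (X \<omega>) \<partial>M) = (\<integral>\<^sup>+z. g (0 * z) \<partial>std_gaussian)" .
qed

lemma gform_cong: "gform M X s \<Longrightarrow> (\<And>\<omega>. \<omega> \<in> space M \<Longrightarrow> X \<omega> = Y \<omega>) \<Longrightarrow> s = t \<Longrightarrow> gform M Y t"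
  unfolding gform_def by (metis (no_types, lifting) nn_integral_cong)

lemma distr_pair_snd': 
  assumes "prob_space N" "prob_space M" shows "distr (N \<Otimes>\<^sub>M M) M snd = M"
proof (intro measure_eqI)
  interpret N: prob_space N by fact
  interpret M: prob_space M by fact
  fix A assume A: "A \<in> sets (distr (N \<Otimes>\<^sub>M M) M snd)"
  from A have "emeasure (distr (N \<Otimes>\<^sub>M M) M snd) A = emeasure (N \<Otimes>\<^sub>M M) (space N \<times> A)"
    by (auto simp add: emeasure_distr space_pair_measure dest: sets.sets_into_space intro!: arg_cong2[where f=emeasure])
  with A show "emeasure (distr (N \<Otimes>\<^sub>M M) M snd) A = emeasure M A"
    by (simp add: M.emeasure_pair_measure_Times N.emeasure_space_1)
qed simp

lemma pps_sg: "pair_prob_space std_gaussian std_gaussian"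
  by (simp add: pair_prob_space_def pair_sigma_finite_def prob_space_sg prob_space_imp_sigma_finite)

lemma gform_2d: "gform (std_gaussian \<Otimes>\<^sub>M std_gaussian) (\<lambda>p. a * fst p + b * snd p) (sqrt (a\<^sup>2 + b\<^sup>2))"
proof -
  interpret SG: prob_space std_gaussian by (rule prob_space_sg)
  interpret P: pair_prob_space std_gaussian std_gaussian by (rule pps_sg)
  have m1[measurable]: "fst \<in> measurable (std_gaussian \<Otimes>\<^sub>M std_gaussian) borel" by measurable
  have m2[measurable]: "snd \<in> measurable (std_gaussian \<Otimes>\<^sub>M std_gaussian) borel" by measurable
  have e1: "distr (std_gaussian \<Otimes>\<^sub>M std_gaussian) borel fst = std_gaussian"
  proof -
    have "distr (std_gaussian \<Otimes>\<^sub>M std_gaussian) borel fst = distr (std_gaussian \<Otimes>\<^sub>M std_gaussian) std_gaussian fst"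
      by (rule distr_cong) auto
    also have "\<dots> = std_gaussian" by (rule SG.distr_pair_fst)
    finally show ?thesis .
  qed
  have e2: "distr (std_gaussian \<Otimes>\<^sub>M std_gaussian) borel snd = std_gaussian"
  proof -
    have "distr (std_gaussian \<Otimes>\<^sub>M std_gaussian) borel snd = distr (std_gaussian \<Otimes>\<^sub>M std_gaussian) std_gaussian snd"
      by (rule distr_cong) auto
    also have "\<dots> = std_gaussian" by (rule distr_pair_snd'[OF prob_space_sg prob_space_sg])
    finally show ?thesis .
  qed
  have e1l: "distr (std_gaussian \<Otimes>\<^sub>M std_gaussian) lborel fst = std_gaussian"
  proof -
    have "distr (std_gaussian \<Otimes>\<^sub>M std_gaussian) lborel fst = distr (std_gaussian \<Otimes>\<^sub>M std_gaussian) std_gaussian fst"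
      by (rule distr_cong) auto
    also have "\<dots> = std_gaussian" by (rule SG.distr_pair_fst)
    finally show ?thesis .
  qed
  have d1: "distributed (std_gaussian \<Otimes>\<^sub>M std_gaussian) lborel fst (normal_density 0 1)"
    unfolding distributed_def using e1l by (simp add: std_gaussian_def)
  have e2l: "distr (std_gaussian \<Otimes>\<^sub>M std_gaussian) lborel snd = std_gaussian"
  proof -
    have "distr (std_gaussian \<Otimes>\<^sub>M std_gaussian) lborel snd = distr (std_gaussian \<Otimes>\<^sub>M std_gaussian) std_gaussian snd"
      by (rule distr_cong) auto
    also have "\<dots> = std_gaussian" by (rule distr_pair_snd'[OF prob_space_sg prob_space_sg])
    finally show ?thesis .
  qed
  have d2: "distributed (std_gaussian \<Otimes>\<^sub>M std_gaussian) lborel snd (normal_density 0 1)"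
    unfolding distributed_def using e2l by (simp add: std_gaussian_def)
  have ind: "P.indep_var borel fst borel snd"
  proof (subst P.indep_var_distribution_eq, intro conjI)
    show "fst \<in> measurable (std_gaussian \<Otimes>\<^sub>M std_gaussian) borel" "snd \<in> measurable (std_gaussian \<Otimes>\<^sub>M std_gaussian) borel" using m1 m2 by auto
    have "distr (std_gaussian \<Otimes>\<^sub>M std_gaussian) (borel \<Otimes>\<^sub>M borel) (\<lambda>x. (fst x, snd x))
        = distr (std_gaussian \<Otimes>\<^sub>M std_gaussian) (std_gaussian \<Otimes>\<^sub>M std_gaussian) (\<lambda>x. x)"
      by (rule distr_cong) (auto intro: sets_pair_measure_cong)
    also have "\<dots> = std_gaussian \<Otimes>\<^sub>M std_gaussian" by (rule distr_id2) simp
    finally show "distr (std_gaussian \<Otimes>\<^sub>M std_gaussian) borel fst \<Otimes>\<^sub>M distr (std_gaussian \<Otimes>\<^sub>M std_gaussian) borel snd =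
      distr (std_gaussian \<Otimes>\<^sub>M std_gaussian) (borel \<Otimes>\<^sub>M borel) (\<lambda>x. (fst x, snd x))"
      by (simp add: e1 e2)
  qed
  have aff1: "distributed (std_gaussian \<Otimes>\<^sub>M std_gaussian) lborel (\<lambda>p. a * fst p) (normal_density 0 \<bar>a\<bar>)" if "a \<noteq> 0"
    using P.normal_density_affine[OF d1, of a 0] that by simp
  have aff2: "distributed (std_gaussian \<Otimes>\<^sub>M std_gaussian) lborel (\<lambda>p. b * snd p) (normal_density 0 \<bar>b\<bar>)" if "b \<noteq> 0"
    using P.normal_density_affine[OF d2, of b 0] that by simp
  show ?thesis
  proof (cases "a = 0")
    case a0: True
    show ?thesis
    proof (cases "b = 0")
      case True
      then show ?thesis using a0 by (intro gform_cong[OF gform_zero[OF P.prob_space_axioms]]) auto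
    next
      case False
      show ?thesis
        by (rule gform_cong[OF gform_normal[OF P.prob_space_axioms aff2[OF False]]]) (use a0 False in auto)
    qed
  next
    case an: False
    show ?thesis
    proof (cases "b = 0")
      case True
      show ?thesis
        by (rule gform_cong[OF gform_normal[OF P.prob_space_axioms aff1[OF an]]]) (use an True in auto)
    next
      case bn: False
      have ind2: "P.indep_var borel ((\<lambda>x. a * x) \<circ> fst) borel ((\<lambda>x. b * x) \<circ> snd)"
        by (rule P.indep_var_compose[OF ind]) auto
      have "distributed (std_gaussian \<Otimes>\<^sub>M std_gaussian) lborel (\<lambda>p. a * fst p + b * snd p)
           (normal_density (0 + 0) (sqrt (\<bar>a\<bar>\<^sup>2 + \<bar>b\<bar>\<^sup>2)))"
        using P.add_indep_normal[OF ind2[unfolded comp_def] _ _ aff1[OF an] aff2[OF bn]] an bn by simp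
      then show ?thesis
        by (intro gform_normal[OF P.prob_space_axioms]) (use an in \<open>auto simp: sum_power2_gt_zero_iff\<close>)
    qed
  qed
qed

lemma psf_sg: "product_sigma_finite (\<lambda>_::nat. std_gaussian)"
  by (simp add: product_sigma_finite_def prob_space_imp_sigma_finite prob_space_sg)

lemma prob_space_rgv: "prob_space (real_gaussian_vector d)"
  unfolding real_gaussian_vector_def by (intro prob_space_PiM prob_space_sg)

lemma gform_rgv: "gform (real_gaussian_vector d) (\<lambda>u. \<Sum>k<d. c k * u k) (sqrt (\<Sum>k<d. (c k)\<^sup>2))"
proof (induction d)
  case 0
  show ?case by (rule gform_cong[OF gform_zero[OF prob_space_rgv]]) auto
next
  case (Suc d)
  interpret PS: product_sigma_finite "\<lambda>_::nat. std_gaussian" by (rule psf_sg)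
  interpret SG: prob_space std_gaussian by (rule prob_space_sg)
  interpret SGs: sigma_finite_measure std_gaussian by (rule prob_space_imp_sigma_finite[OF prob_space_sg])
  define \<sigma> where "\<sigma> = sqrt (\<Sum>k<d. (c k)\<^sup>2)"
  show ?case unfolding gform_def
  proof
    fix g :: "real \<Rightarrow> ennreal" assume g[measurable]: "g \<in> borel_measurable borel"
    have ins: "{..<Suc d} = insert d {..<d}" by auto
    have "(\<integral>\<^sup>+u. g (\<Sum>k<Suc d. c k * u k) \<partial>real_gaussian_vector (Suc d))
       = (\<integral>\<^sup>+x. \<integral>\<^sup>+y. g (\<Sum>k<Suc d. c k * (x(d := y)) k) \<partial>std_gaussian \<partial>(PiM {..<d} (\<lambda>_. std_gaussian)))"
      unfolding real_gaussian_vector_def ins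
      by (rule PS.product_nn_integral_insert) auto
    also have "\<dots> = (\<integral>\<^sup>+x. \<integral>\<^sup>+y. g ((\<Sum>k<d. c k * x k) + c d * y) \<partial>std_gaussian \<partial>(PiM {..<d} (\<lambda>_. std_gaussian)))"
    proof (intro nn_integral_cong)
      fix x y
      have "(\<Sum>k<d. c k * (x(d := y)) k) = (\<Sum>k<d. c k * x k)" by (intro sum.cong) auto
      then show "g (\<Sum>k<Suc d. c k * (x(d := y)) k) = g ((\<Sum>k<d. c k * x k) + c d * y)" by simp
    qed
    also have "\<dots> = (\<integral>\<^sup>+z. (\<lambda>t. \<integral>\<^sup>+y. g (t + c d * y) \<partial>std_gaussian) (\<sigma> * z) \<partial>std_gaussian)"
      using gformD[OF Suc.IH, of "\<lambda>t. \<integral>\<^sup>+y. g (t + c d * y) \<partial>std_gaussian"]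
      unfolding real_gaussian_vector_def \<sigma>_def by simp
    also have "\<dots> = (\<integral>\<^sup>+p. g (\<sigma> * fst p + c d * snd p) \<partial>(std_gaussian \<Otimes>\<^sub>M std_gaussian))"
      by (subst sigma_finite_measure.nn_integral_fst[OF prob_space_imp_sigma_finite[OF prob_space_sg], symmetric]) auto
    also have "\<dots> = (\<integral>\<^sup>+z. g (sqrt (\<sigma>\<^sup>2 + (c d)\<^sup>2) * z) \<partial>std_gaussian)"
      by (rule gformD[OF gform_2d g])
    also have "sqrt (\<sigma>\<^sup>2 + (c d)\<^sup>2) = sqrt (\<Sum>k<Suc d. (c k)\<^sup>2)"
      unfolding \<sigma>_def by (simp add: sum_nonneg)
    finally show "(\<integral>\<^sup>+u. g (\<Sum>k<Suc d. c k * u k) \<partial>real_gaussian_vector (Suc d)) =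
        (\<integral>\<^sup>+z. g (sqrt (\<Sum>k<Suc d. (c k)\<^sup>2) * z) \<partial>std_gaussian)" .
  qed
qed

lemma sf_rgv: "sigma_finite_measure (real_gaussian_vector d)"
  by (rule prob_space_imp_sigma_finite[OF prob_space_rgv])

lemma gform_rgv2: "gform (real_gaussian_vector d \<Otimes>\<^sub>M real_gaussian_vector d)
   (\<lambda>p. \<Sum>k<d. \<alpha> k * fst p k + \<beta> k * snd p k) (sqrt (\<Sum>k<d. (\<alpha> k)\<^sup>2 + (\<beta> k)\<^sup>2))"
  unfolding gform_def
proof
  fix g :: "real \<Rightarrow> ennreal" assume g[measurable]: "g \<in> borel_measurable borel"
  define R where "R = real_gaussian_vector d"
  define sA where "sA = sqrt (\<Sum>k<d. (\<alpha> k)\<^sup>2)"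
  define sB where "sB = sqrt (\<Sum>k<d. (\<beta> k)\<^sup>2)"
  have Rm[measurable_cong]: "sets R = sets (PiM {..<d} (\<lambda>_. borel))"
    unfolding R_def real_gaussian_vector_def by (intro sets_PiM_cong) auto
  interpret PSF: pair_sigma_finite R std_gaussian
    by (simp add: pair_sigma_finite_def R_def sf_rgv prob_space_imp_sigma_finite prob_space_sg)
  have "(\<integral>\<^sup>+p. g (\<Sum>k<d. \<alpha> k * fst p k + \<beta> k * snd p k) \<partial>(R \<Otimes>\<^sub>M R))
      = (\<integral>\<^sup>+u. \<integral>\<^sup>+v. g ((\<Sum>k<d. \<alpha> k * u k) + (\<Sum>k<d. \<beta> k * v k)) \<partial>R \<partial>R)"
    by (subst sigma_finite_measure.nn_integral_fst[OF sf_rgv[of d, folded R_def], symmetric])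
       (auto simp: sum.distrib)
  also have "\<dots> = (\<integral>\<^sup>+u. \<integral>\<^sup>+z. g ((\<Sum>k<d. \<alpha> k * u k) + sB * z) \<partial>std_gaussian \<partial>R)"
    by (intro nn_integral_cong gformD[OF gform_rgv[of d \<beta>, folded R_def sB_def]]) auto
  also have "\<dots> = (\<integral>\<^sup>+z. \<integral>\<^sup>+u. g ((\<Sum>k<d. \<alpha> k * u k) + sB * z) \<partial>R \<partial>std_gaussian)"
    by (rule PSF.Fubini'[symmetric]) auto
  also have "\<dots> = (\<integral>\<^sup>+z. \<integral>\<^sup>+z'. g (sA * z' + sB * z) \<partial>std_gaussian \<partial>std_gaussian)"
    by (intro nn_integral_cong) (rule gformD[OF gform_rgv[of d \<alpha>, folded R_def sA_def], of "\<lambda>t. g (t + sB * _)", simplified])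
  also have "\<dots> = (\<integral>\<^sup>+p. g (sB * fst p + sA * snd p) \<partial>(std_gaussian \<Otimes>\<^sub>M std_gaussian))"
    by (subst sigma_finite_measure.nn_integral_fst[OF prob_space_imp_sigma_finite[OF prob_space_sg], symmetric])
       (auto simp: add.commute)
  also have "\<dots> = (\<integral>\<^sup>+z. g (sqrt (sB\<^sup>2 + sA\<^sup>2) * z) \<partial>std_gaussian)"
    by (rule gformD[OF gform_2d g])
  also have "sqrt (sB\<^sup>2 + sA\<^sup>2) = sqrt (\<Sum>k<d. (\<alpha> k)\<^sup>2 + (\<beta> k)\<^sup>2)"
    unfolding sA_def sB_def by (simp add: sum_nonneg sum.distrib)
  finally show "(\<integral>\<^sup>+p. g (\<Sum>k<d. \<alpha> k * fst p k + \<beta> k * snd p k) \<partial>(real_gaussian_vector d \<Otimes>\<^sub>M real_gaussian_vector d)) =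
        (\<integral>\<^sup>+z. g (sqrt (\<Sum>k<d. (\<alpha> k)\<^sup>2 + (\<beta> k)\<^sup>2) * z) \<partial>std_gaussian)" unfolding R_def .
qed

lemma meas_Complex[measurable (raw)]:
  "f \<in> borel_measurable M \<Longrightarrow> g \<in> borel_measurable M \<Longrightarrow> (\<lambda>x. Complex (f x) (g x)) \<in> borel_measurable M"
  unfolding Complex_eq
  by (intro borel_measurable_add borel_measurable_times measurable_const measurable_compose[OF _ borel_measurable_of_real]) auto

lemma meas_cnj[measurable (raw)]:
  "f \<in> borel_measurable M \<Longrightarrow> (\<lambda>x. cnj (f x)) \<in> borel_measurable M"
proof -
  assume [measurable]: "f \<in> borel_measurable M"
  have "(\<lambda>x. cnj (f x)) = (\<lambda>x. Complex (Re (f x)) (- Im (f x)))" by (auto simp: complex_eq_iff)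
  also have "\<dots> \<in> borel_measurable M" by measurable
  finally show ?thesis .
qed

definition cF :: "nat \<Rightarrow> (nat \<Rightarrow> real) \<times> (nat \<Rightarrow> real) \<Rightarrow> nat \<Rightarrow> complex" where
  "cF d = (\<lambda>(u, v). \<lambda>k\<in>{..<d}. Complex (u k / sqrt 2) (v k / sqrt 2))"

lemma cgv_eq: "complex_gaussian_vector d = distr (real_gaussian_vector d \<Otimes>\<^sub>M real_gaussian_vector d) (PiM {..<d} (\<lambda>_. borel)) (cF d)"
  unfolding complex_gaussian_vector_def cF_def ..

lemma sets_rgv[measurable_cong]: "sets (real_gaussian_vector d) = sets (PiM {..<d} (\<lambda>_. borel))"
  unfolding real_gaussian_vector_def by (intro sets_PiM_cong) auto

lemma cF_meas[measurable]: "cF d \<in> measurable (real_gaussian_vector d \<Otimes>\<^sub>M real_gaussian_vector d) (PiM {..<d} (\<lambda>_. borel))"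
  unfolding cF_def by measurable

lemma sets_cgv[measurable_cong]: "sets (complex_gaussian_vector d) = sets (PiM {..<d} (\<lambda>_. borel))"
  unfolding cgv_eq by simp

lemma space_cgv: "space (complex_gaussian_vector d) = space (PiM {..<d} (\<lambda>_. (borel :: complex measure)))"
  unfolding cgv_eq by simp

lemma prob_space_cgv: "prob_space (complex_gaussian_vector d)"
  unfolding cgv_eq
proof (rule prob_space.prob_space_distr)
  show "prob_space (real_gaussian_vector d \<Otimes>\<^sub>M real_gaussian_vector d)"
    by (intro prob_space_pair prob_space_rgv)
qed simp

lemma cinner_meas[measurable]: "(\<lambda>a. cinner d a x) \<in> borel_measurable (PiM {..<d} (\<lambda>_. borel))"
  unfolding cinner_def by measurable

lemma Re_cinner_cF: "Re (cinner d (cF d p) x) = (\<Sum>k<d. (Re (x k) / sqrt 2) * fst p k + (Im (x k) / sqrt 2) * snd p k)"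
  unfolding cinner_def cF_def by (cases p) (auto simp: Re_sum algebra_simps intro!: sum.cong)

lemma Im_cinner_cF: "Im (cinner d (cF d p) x) = (\<Sum>k<d. (Im (x k) / sqrt 2) * fst p k + (- Re (x k) / sqrt 2) * snd p k)"
  unfolding cinner_def cF_def by (cases p) (auto simp: Im_sum algebra_simps intro!: sum.cong)

lemma coef_sum: "(\<Sum>k<d. (Re (x k) / sqrt 2)\<^sup>2 + (Im (x k) / sqrt 2)\<^sup>2) = (\<Sum>k<d. (cmod (x k))\<^sup>2) / 2"
  by (simp add: sum_divide_distrib power_divide cmod_power2 add_divide_distrib)

lemma gform_Re: "gform (complex_gaussian_vector d) (\<lambda>a. Re (cinner d a x)) (sqrt ((\<Sum>k<d. (cmod (x k))\<^sup>2) / 2))"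
  unfolding gform_def
proof
  fix g :: "real \<Rightarrow> ennreal" assume g[measurable]: "g \<in> borel_measurable borel"
  have "(\<integral>\<^sup>+a. g (Re (cinner d a x)) \<partial>complex_gaussian_vector d)
     = (\<integral>\<^sup>+p. g (Re (cinner d (cF d p) x)) \<partial>(real_gaussian_vector d \<Otimes>\<^sub>M real_gaussian_vector d))"
    unfolding cgv_eq by (subst nn_integral_distr) auto
  also have "\<dots> = (\<integral>\<^sup>+z. g (sqrt ((\<Sum>k<d. (cmod (x k))\<^sup>2) / 2) * z) \<partial>std_gaussian)"
    unfolding Re_cinner_cF coef_sum[symmetric] by (rule gformD[OF gform_rgv2 g])
  finally show "(\<integral>\<^sup>+a. g (Re (cinner d a x)) \<partial>complex_gaussian_vector d) = (\<integral>\<^sup>+z. g (sqrt ((\<Sum>k<d. (cmod (x k))\<^sup>2) / 2) * z) \<partial>std_gaussian)" .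
qed

lemma gform_Im: "gform (complex_gaussian_vector d) (\<lambda>a. Im (cinner d a x)) (sqrt ((\<Sum>k<d. (cmod (x k))\<^sup>2) / 2))"
  unfolding gform_def
proof
  fix g :: "real \<Rightarrow> ennreal" assume g[measurable]: "g \<in> borel_measurable borel"
  have cs: "(\<Sum>k<d. (Im (x k) / sqrt 2)\<^sup>2 + (- Re (x k) / sqrt 2)\<^sup>2) = (\<Sum>k<d. (cmod (x k))\<^sup>2) / 2"
    unfolding coef_sum[symmetric] by (intro sum.cong) (auto simp: power2_eq_square)
  have "(\<integral>\<^sup>+a. g (Im (cinner d a x)) \<partial>complex_gaussian_vector d)
     = (\<integral>\<^sup>+p. g (Im (cinner d (cF d p) x)) \<partial>(real_gaussian_vector d \<Otimes>\<^sub>M real_gaussian_vector d))"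
    unfolding cgv_eq by (subst nn_integral_distr) auto
  also have "\<dots> = (\<integral>\<^sup>+z. g (sqrt ((\<Sum>k<d. (cmod (x k))\<^sup>2) / 2) * z) \<partial>std_gaussian)"
    unfolding Im_cinner_cF cs[symmetric] by (rule gformD[OF gform_rgv2 g])
  finally show "(\<integral>\<^sup>+a. g (Im (cinner d a x)) \<partial>complex_gaussian_vector d) = (\<integral>\<^sup>+z. g (sqrt ((\<Sum>k<d. (cmod (x k))\<^sup>2) / 2) * z) \<partial>std_gaussian)" .
qed

lemma amgm_exp: fixes A B :: real shows "exp (A + B) \<le> exp (2 * A) / 2 + exp (2 * B) / 2"
proof -
  have e: "exp (A + B) = exp A * exp B" by (rule exp_add)
  have "exp (2 * A) = (exp A)\<^sup>2" "exp (2 * B) = (exp B)\<^sup>2"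
    by (simp_all add: exp_double)
  moreover have "2 * exp A * exp B \<le> (exp A)\<^sup>2 + (exp B)\<^sup>2" by (rule sum_squares_bound)
  ultimately show ?thesis unfolding e by linarith
qed

lemma half_ennreal: "ennreal (e / 2) = ennreal (1/2) * ennreal e"
proof -
  have "ennreal (e / 2) = ennreal (1/2 * e)" by (rule arg_cong[where f=ennreal]) simp
  also have "\<dots> = ennreal (1/2) * ennreal e" by (rule ennreal_mult') simp
  finally show ?thesis .
qed

lemma half_bound:
  fixes l n \<beta> :: real and g :: "'a \<Rightarrow> real" and M :: "'a measure"
  assumes G: "gform M g (sqrt (n / 2))" and n: "n \<ge> 0" and l: "\<bar>2 * l * n\<bar> \<le> 1/2"
  shows "(\<integral>\<^sup>+a. ennreal (exp (2 * l * ((g a + \<beta>)\<^sup>2 - \<beta>\<^sup>2))) \<partial>M) \<le> ennreal (exp (l * n + 4 * l\<^sup>2 * n\<^sup>2 + 8 * l\<^sup>2 * n * \<beta>\<^sup>2))"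
proof -
  define w where "w = sqrt (n / 2)"
  have w2: "w\<^sup>2 = n / 2" using n by (simp add: w_def)
  have w4: "w ^ 4 = n\<^sup>2 / 4" proof -
    have "w ^ 4 = (w\<^sup>2)\<^sup>2" by simp
    then show ?thesis by (simp add: w2 power_divide)
  qed
  have "(\<integral>\<^sup>+a. ennreal (exp (2 * l * ((g a + \<beta>)\<^sup>2 - \<beta>\<^sup>2))) \<partial>M)
      = (\<integral>\<^sup>+z. ennreal (exp (2 * l * ((w * z + \<beta>)\<^sup>2 - \<beta>\<^sup>2))) \<partial>std_gaussian)"
    using gformD[OF G, of "\<lambda>t. ennreal (exp (2 * l * ((t + \<beta>)\<^sup>2 - \<beta>\<^sup>2)))"] unfolding w_def by simp
  also have "\<dots> \<le> ennreal (exp ((2 * l) * w\<^sup>2 + 4 * (2 * l)\<^sup>2 * w^4 + 4 * (2 * l)\<^sup>2 * w\<^sup>2 * \<beta>\<^sup>2))"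
    by (rule gauss_quad_bound) (use l in \<open>simp add: w2\<close>)
  also have "(2 * l) * w\<^sup>2 + 4 * (2 * l)\<^sup>2 * w^4 + 4 * (2 * l)\<^sup>2 * w\<^sup>2 * \<beta>\<^sup>2 = l * n + 4 * l\<^sup>2 * n\<^sup>2 + 8 * l\<^sup>2 * n * \<beta>\<^sup>2"
    unfolding w2 w4 by (simp add: power2_eq_square)
  finally show ?thesis .
qed

lemma sample_bound:
  fixes l :: real and bv :: complex and x :: "nat \<Rightarrow> complex"
  assumes l: "\<bar>2 * l * (\<Sum>k<d. (cmod (x k))\<^sup>2)\<bar> \<le> 1/2"
  shows "(\<integral>\<^sup>+a. ennreal (exp (l * ((cmod (cinner d a x + bv))\<^sup>2 - (cmod bv)\<^sup>2))) \<partial>complex_gaussian_vector d)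
     \<le> ennreal (exp (l * (\<Sum>k<d. (cmod (x k))\<^sup>2) + 4 * l\<^sup>2 * (\<Sum>k<d. (cmod (x k))\<^sup>2)\<^sup>2 + 8 * l\<^sup>2 * (\<Sum>k<d. (cmod (x k))\<^sup>2) * (cmod bv)\<^sup>2))"
    (is "_ \<le> ennreal ?B")
proof -
  define n where "n = (\<Sum>k<d. (cmod (x k))\<^sup>2)"
  have n: "n \<ge> 0" unfolding n_def by (simp add: sum_nonneg)
  define b1 where "b1 = Re bv"
  define b2 where "b2 = Im bv"
  define B where "B = exp (l * n + 4 * l\<^sup>2 * n\<^sup>2 + 8 * l\<^sup>2 * n * (cmod bv)\<^sup>2)"
  have Bmono: "exp (l * n + 4 * l\<^sup>2 * n\<^sup>2 + 8 * l\<^sup>2 * n * \<beta>\<^sup>2) \<le> B" if "\<beta>\<^sup>2 \<le> (cmod bv)\<^sup>2" for \<beta>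
    unfolding B_def using that n by (simp add: mult_left_mono)
  have b1: "b1\<^sup>2 \<le> (cmod bv)\<^sup>2" unfolding b1_def by (simp add: cmod_power2)
  have b2: "b2\<^sup>2 \<le> (cmod bv)\<^sup>2" unfolding b2_def by (simp add: cmod_power2)
  have l': "\<bar>2 * l * n\<bar> \<le> 1/2" using l by (simp add: n_def)
  have pt: "ennreal (exp (l * ((cmod (cinner d a x + bv))\<^sup>2 - (cmod bv)\<^sup>2)))
      \<le> ennreal (1/2) * ennreal (exp (2 * l * ((Re (cinner d a x) + b1)\<^sup>2 - b1\<^sup>2)))
        + ennreal (1/2) * ennreal (exp (2 * l * ((Im (cinner d a x) + b2)\<^sup>2 - b2\<^sup>2)))" for a
  proof -
    have "l * ((cmod (cinner d a x + bv))\<^sup>2 - (cmod bv)\<^sup>2)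
       = l * ((Re (cinner d a x) + b1)\<^sup>2 - b1\<^sup>2) + l * ((Im (cinner d a x) + b2)\<^sup>2 - b2\<^sup>2)"
      unfolding b1_def b2_def cmod_power2 by (simp add: algebra_simps)
    then have "exp (l * ((cmod (cinner d a x + bv))\<^sup>2 - (cmod bv)\<^sup>2))
       \<le> exp (2 * l * ((Re (cinner d a x) + b1)\<^sup>2 - b1\<^sup>2)) / 2 + exp (2 * l * ((Im (cinner d a x) + b2)\<^sup>2 - b2\<^sup>2)) / 2"
      using amgm_exp by (simp add: mult.assoc)
    then have "ennreal (exp (l * ((cmod (cinner d a x + bv))\<^sup>2 - (cmod bv)\<^sup>2)))
       \<le> ennreal (exp (2 * l * ((Re (cinner d a x) + b1)\<^sup>2 - b1\<^sup>2)) / 2 + exp (2 * l * ((Im (cinner d a x) + b2)\<^sup>2 - b2\<^sup>2)) / 2)"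
      by (rule ennreal_leI)
    also have "\<dots> = ennreal (exp (2 * l * ((Re (cinner d a x) + b1)\<^sup>2 - b1\<^sup>2)) / 2) + ennreal (exp (2 * l * ((Im (cinner d a x) + b2)\<^sup>2 - b2\<^sup>2)) / 2)"
      by (rule ennreal_plus) auto
    also have "\<dots> = ennreal (1/2) * ennreal (exp (2 * l * ((Re (cinner d a x) + b1)\<^sup>2 - b1\<^sup>2)))
        + ennreal (1/2) * ennreal (exp (2 * l * ((Im (cinner d a x) + b2)\<^sup>2 - b2\<^sup>2)))"
      by (rule arg_cong2[where f="(+)"]; rule half_ennreal)
    finally show ?thesis .
  qed
  have "(\<integral>\<^sup>+a. ennreal (exp (l * ((cmod (cinner d a x + bv))\<^sup>2 - (cmod bv)\<^sup>2))) \<partial>complex_gaussian_vector d)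
     \<le> (\<integral>\<^sup>+a. ennreal (1/2) * ennreal (exp (2 * l * ((Re (cinner d a x) + b1)\<^sup>2 - b1\<^sup>2)))
        + ennreal (1/2) * ennreal (exp (2 * l * ((Im (cinner d a x) + b2)\<^sup>2 - b2\<^sup>2))) \<partial>complex_gaussian_vector d)"
    by (intro nn_integral_mono pt)
  also have "\<dots> = ennreal (1/2) * (\<integral>\<^sup>+a. ennreal (exp (2 * l * ((Re (cinner d a x) + b1)\<^sup>2 - b1\<^sup>2))) \<partial>complex_gaussian_vector d)
        + ennreal (1/2) * (\<integral>\<^sup>+a. ennreal (exp (2 * l * ((Im (cinner d a x) + b2)\<^sup>2 - b2\<^sup>2))) \<partial>complex_gaussian_vector d)"
    by (subst nn_integral_add) (auto simp: nn_integral_cmult)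
  also have "\<dots> \<le> ennreal (1/2) * ennreal B + ennreal (1/2) * ennreal B"
  proof -
    have h1: "(\<integral>\<^sup>+a. ennreal (exp (2 * l * ((Re (cinner d a x) + b1)\<^sup>2 - b1\<^sup>2))) \<partial>complex_gaussian_vector d) \<le> ennreal B"
      using half_bound[OF gform_Re[of d x, folded n_def] n l', of b1] Bmono[OF b1]
      by (meson order_trans ennreal_leI)
    have h2: "(\<integral>\<^sup>+a. ennreal (exp (2 * l * ((Im (cinner d a x) + b2)\<^sup>2 - b2\<^sup>2))) \<partial>complex_gaussian_vector d) \<le> ennreal B"
      using half_bound[OF gform_Im[of d x, folded n_def] n l', of b2] Bmono[OF b2]
      by (meson order_trans ennreal_leI)
    show ?thesis by (intro add_mono mult_left_mono h1 h2) auto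
  qed
  also have "\<dots> = (ennreal (1/2) + ennreal (1/2)) * ennreal B" by (simp only: distrib_right)
  also have "ennreal (1/2) + ennreal (1/2) = (1::ennreal)" by (subst ennreal_plus[symmetric]) auto
  also have "1 * ennreal B = ennreal B" by simp
  finally show ?thesis by (simp add: B_def n_def)
qed

lemma sets_gs[measurable_cong]: "sets (gaussian_sample d m) = sets (PiM {..<m} (\<lambda>_. PiM {..<d} (\<lambda>_. (borel :: complex measure))))"
  unfolding gaussian_sample_def by (intro sets_PiM_cong) (auto simp: sets_cgv)

lemma prob_space_gs: "prob_space (gaussian_sample d m)"
  unfolding gaussian_sample_def by (intro prob_space_PiM prob_space_cgv)

definition Ssum :: "nat \<Rightarrow> nat \<Rightarrow> (nat \<Rightarrow> complex) \<Rightarrow> (nat \<Rightarrow> complex) \<Rightarrow> (nat \<Rightarrow> nat \<Rightarrow> complex) \<Rightarrow> real" where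
  "Ssum d m x b a = (\<Sum>j<m. (cmod (cinner d (a j) x + b j))\<^sup>2 - (cmod (b j))\<^sup>2)"

lemma Ssum_meas[measurable]: "Ssum d m x b \<in> borel_measurable (PiM {..<m} (\<lambda>_. PiM {..<d} (\<lambda>_. (borel :: complex measure))))"
  unfolding Ssum_def by measurable

lemma mgf_bound:
  fixes l :: real
  assumes l: "\<bar>2 * l * (\<Sum>k<d. (cmod (x k))\<^sup>2)\<bar> \<le> 1/2"
  shows "(\<integral>\<^sup>+a. ennreal (exp (l * Ssum d m x b a)) \<partial>gaussian_sample d m)
    \<le> ennreal (exp (l * m * (\<Sum>k<d. (cmod (x k))\<^sup>2) + 4 * l\<^sup>2 * m * (\<Sum>k<d. (cmod (x k))\<^sup>2)\<^sup>2
         + 8 * l\<^sup>2 * (\<Sum>k<d. (cmod (x k))\<^sup>2) * (\<Sum>j<m. (cmod (b j))\<^sup>2)))"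
proof -
  define n where "n = (\<Sum>k<d. (cmod (x k))\<^sup>2)"
  interpret PS: product_sigma_finite "\<lambda>_::nat. complex_gaussian_vector d"
    by (simp add: product_sigma_finite_def prob_space_imp_sigma_finite prob_space_cgv)
  define W where "W j a = l * ((cmod (cinner d a x + b j))\<^sup>2 - (cmod (b j))\<^sup>2)" for j a
  have Wm[measurable]: "(\<lambda>a. ennreal (exp (W j a))) \<in> borel_measurable (complex_gaussian_vector d)" for j
    unfolding W_def by measurable
  have Wm'[measurable]: "(\<lambda>a. exp (W j a)) \<in> borel_measurable (complex_gaussian_vector d)" for j
    unfolding W_def by measurable
  have "(\<integral>\<^sup>+a. ennreal (exp (l * Ssum d m x b a)) \<partial>gaussian_sample d m)
      = (\<integral>\<^sup>+a. (\<Prod>j<m. ennreal (exp (W j (a j)))) \<partial>gaussian_sample d m)"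
    by (intro nn_integral_cong)
       (simp add: Ssum_def W_def sum_distrib_left exp_sum prod_ennreal)
  also have "\<dots> = (\<Prod>j<m. \<integral>\<^sup>+a. ennreal (exp (W j a)) \<partial>complex_gaussian_vector d)"
    unfolding gaussian_sample_def by (rule PS.product_nn_integral_prod) auto
  also have "\<dots> \<le> (\<Prod>j<m. ennreal (exp (l * n + 4 * l\<^sup>2 * n\<^sup>2 + 8 * l\<^sup>2 * n * (cmod (b j))\<^sup>2)))"
    by (intro prod_mono_ennreal) (unfold W_def n_def, rule sample_bound[OF l])
  also have "\<dots> = ennreal (exp (\<Sum>j<m. l * n + 4 * l\<^sup>2 * n\<^sup>2 + 8 * l\<^sup>2 * n * (cmod (b j))\<^sup>2))"
    by (simp add: exp_sum prod_ennreal)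
  also have "(\<Sum>j<m. l * n + 4 * l\<^sup>2 * n\<^sup>2 + 8 * l\<^sup>2 * n * (cmod (b j))\<^sup>2)
      = l * m * n + 4 * l\<^sup>2 * m * n\<^sup>2 + 8 * l\<^sup>2 * n * (\<Sum>j<m. (cmod (b j))\<^sup>2)"
    by (simp add: sum.distrib sum_distrib_left algebra_simps)
  finally show ?thesis unfolding n_def .
qed

lemma markov_exp:
  assumes "A \<in> sets M" "\<And>a. a \<in> A \<Longrightarrow> 1 \<le> f a"
  shows "emeasure M A \<le> (\<integral>\<^sup>+a. ennreal (f a) \<partial>M)"
proof -
  have "emeasure M A = (\<integral>\<^sup>+a. indicator A a \<partial>M)" using assms(1) by simp
  also have "\<dots> \<le> (\<integral>\<^sup>+a. ennreal (f a) \<partial>M)"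
  proof (intro nn_integral_mono)
    fix a show "indicator A a \<le> ennreal (f a)"
      using assms(2)[of a] by (cases "a \<in> A") (auto simp: ennreal_leI[of 1, simplified])
  qed
  finally show ?thesis .
qed

lemma tail:
  fixes l T E :: real
  assumes A: "A \<in> sets (gaussian_sample d m)" "A \<subseteq> space (gaussian_sample d m)"
    and AT: "\<And>a. a \<in> A \<Longrightarrow> l * T \<le> l * Ssum d m x b a"
    and l: "\<bar>2 * l * (\<Sum>k<d. (cmod (x k))\<^sup>2)\<bar> \<le> 1/2"
    and E: "- (l * T) + (l * m * (\<Sum>k<d. (cmod (x k))\<^sup>2) + 4 * l\<^sup>2 * m * (\<Sum>k<d. (cmod (x k))\<^sup>2)\<^sup>2
         + 8 * l\<^sup>2 * (\<Sum>k<d. (cmod (x k))\<^sup>2) * (\<Sum>j<m. (cmod (b j))\<^sup>2)) \<le> E"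
  shows "measure (gaussian_sample d m) A \<le> exp E"
proof -
  interpret P: prob_space "gaussian_sample d m" by (rule prob_space_gs)
  define F where "F = l * m * (\<Sum>k<d. (cmod (x k))\<^sup>2) + 4 * l\<^sup>2 * m * (\<Sum>k<d. (cmod (x k))\<^sup>2)\<^sup>2
         + 8 * l\<^sup>2 * (\<Sum>k<d. (cmod (x k))\<^sup>2) * (\<Sum>j<m. (cmod (b j))\<^sup>2)"
  have "emeasure (gaussian_sample d m) A \<le> (\<integral>\<^sup>+a. ennreal (exp (- (l * T)) * exp (l * Ssum d m x b a)) \<partial>gaussian_sample d m)"
  proof (rule markov_exp[OF A(1)])
    fix a assume "a \<in> A"
    then have "0 \<le> - (l * T) + l * Ssum d m x b a" using AT by simp
    then show "1 \<le> exp (- (l * T)) * exp (l * Ssum d m x b a)"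
      by (simp add: mult_exp_exp)
  qed
  also have "\<dots> = ennreal (exp (- (l * T))) * (\<integral>\<^sup>+a. ennreal (exp (l * Ssum d m x b a)) \<partial>gaussian_sample d m)"
    by (subst nn_integral_cmult[symmetric]) (auto simp: ennreal_mult)
  also have "\<dots> \<le> ennreal (exp (- (l * T))) * ennreal (exp F)"
    unfolding F_def by (intro mult_left_mono mgf_bound l) auto
  also have "\<dots> = ennreal (exp (- (l * T) + F))" by (simp add: ennreal_mult[symmetric] mult_exp_exp)
  also have "\<dots> \<le> ennreal (exp E)" using E unfolding F_def by (intro ennreal_leI) simp
  finally show ?thesis by (simp add: P.emeasure_eq_measure)
qed

lemma ineq_common:
  fixes n m Bs C0 K \<mu> :: real
  assumes n: "n > 0" and m: "m > 0" and Bs: "0 \<le> Bs" "Bs \<le> C0\<^sup>2 * m * n"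
    and K: "K = 4 + 8 * C0\<^sup>2" and mu: "\<mu> = 1 / (2 * K)"
  shows "4 * (\<mu> / n)\<^sup>2 * m * n\<^sup>2 + 8 * (\<mu> / n)\<^sup>2 * n * Bs \<le> m / (4 * K)"
proof -
  have Kp: "K > 0" using K by (simp add: add_pos_nonneg)
  have e1: "4 * (\<mu> / n)\<^sup>2 * m * n\<^sup>2 = 4 * \<mu>\<^sup>2 * m" using n by (simp add: power_divide field_simps)
  have e2: "8 * (\<mu> / n)\<^sup>2 * n * Bs = 8 * \<mu>\<^sup>2 * (Bs / n)" using n by (simp add: power_divide field_simps power2_eq_square)
  have "Bs / n \<le> C0\<^sup>2 * m" using Bs n by (simp add: divide_le_eq mult.assoc)
  then have "8 * \<mu>\<^sup>2 * (Bs / n) \<le> 8 * \<mu>\<^sup>2 * (C0\<^sup>2 * m)" by (intro mult_left_mono) auto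
  then have "4 * (\<mu> / n)\<^sup>2 * m * n\<^sup>2 + 8 * (\<mu> / n)\<^sup>2 * n * Bs \<le> \<mu>\<^sup>2 * K * m"
    unfolding e1 e2 K by (simp add: algebra_simps)
  also have "\<mu>\<^sup>2 * K * m = m / (4 * K)" using Kp unfolding mu by (simp add: power2_eq_square field_simps)
  finally show ?thesis .
qed

lemma main_bound:
  fixes C0 :: real
  assumes C0: "C0 > 0" and m: "m > 0" and hb: "cnorm2 m b \<le> C0 * sqrt (real m) * cnorm2 d x"
  shows "measure (gaussian_sample d m)
             {a \<in> space (gaussian_sample d m).
                R0 d m x b a / 3 \<le> cnorm2 d x \<and> cnorm2 d x \<le> R0 d m x b a}
           \<ge> 1 - 4 * exp (- (1 / (8 * (4 + 8 * C0\<^sup>2))) * real m)"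
proof -
  interpret P: prob_space "gaussian_sample d m" by (rule prob_space_gs)
  define n where "n = (\<Sum>k<d. (cmod (x k))\<^sup>2)"
  define Bs where "Bs = (\<Sum>j<m. (cmod (b j))\<^sup>2)"
  define K where "K = 4 + 8 * C0\<^sup>2"
  define c where "c = 1 / (8 * K)"
  define S where "S = Ssum d m x b"
  have n0: "n \<ge> 0" unfolding n_def by (simp add: sum_nonneg)
  have Bs0: "Bs \<ge> 0" unfolding Bs_def by (simp add: sum_nonneg)
  have Kp: "K > 0" unfolding K_def by (simp add: add_pos_nonneg)
  have cx: "cnorm2 d x = sqrt n" unfolding cnorm2_def n_def ..
  have cb: "(cnorm2 m b)\<^sup>2 = Bs" unfolding cnorm2_def Bs_def by (simp add: sum_nonneg)
  have R0eq: "R0 d m x b a = 2 * sqrt (S a / m)" for a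
    unfolding R0_def cb S_def Ssum_def Bs_def by (simp add: sum_subtractf diff_divide_distrib)
  define Tset where "Tset = {a \<in> space (gaussian_sample d m). R0 d m x b a / 3 \<le> cnorm2 d x \<and> cnorm2 d x \<le> R0 d m x b a}"
  have Tset_eq: "Tset = {a \<in> space (gaussian_sample d m). 2 * sqrt (S a / m) / 3 \<le> sqrt n \<and> sqrt n \<le> 2 * sqrt (S a / m)}"
    unfolding Tset_def R0eq cx ..
  have Sm[measurable]: "S \<in> borel_measurable (gaussian_sample d m)" unfolding S_def by measurable
  have Tm: "Tset \<in> sets (gaussian_sample d m)" unfolding Tset_eq by measurable
  have goal_eq: "?thesis \<longleftrightarrow> measure (gaussian_sample d m) Tset \<ge> 1 - 4 * exp (- c * real m)"
    unfolding Tset_def c_def K_def ..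
  show ?thesis
  proof (cases "n = 0")
    case True
    then have xk: "x k = 0" if "k < d" for k
      using that unfolding n_def by (subst (asm) sum_nonneg_eq_0_iff) auto
    have "S a = 0" for a
      unfolding S_def Ssum_def cinner_def using xk by simp
    then have "Tset = space (gaussian_sample d m)" unfolding Tset_eq using True by simp
    then have "measure (gaussian_sample d m) Tset = 1" by (simp add: P.prob_space)
    then show ?thesis unfolding goal_eq by simp
  next
    case False
    then have np: "n > 0" using n0 by simp
    have hb2: "Bs \<le> C0\<^sup>2 * m * n"
    proof -
      have "0 \<le> cnorm2 m b" unfolding cnorm2_def by (simp add: sum_nonneg)
      then have "(cnorm2 m b)\<^sup>2 \<le> (C0 * sqrt (real m) * sqrt n)\<^sup>2"
        using hb unfolding cx by (intro power_mono) auto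
      then show ?thesis unfolding cb using n0 by (simp add: power_mult_distrib)
    qed
    define \<mu> where "\<mu> = 1 / (2 * K)"
    have common: "4 * (\<mu> / n)\<^sup>2 * m * n\<^sup>2 + 8 * (\<mu> / n)\<^sup>2 * n * Bs \<le> m / (4 * K)"
      by (rule ineq_common[OF np _ Bs0 hb2 K_def \<mu>_def]) (use m in simp)
    have common': "4 * (- \<mu> / n)\<^sup>2 * m * n\<^sup>2 + 8 * (- \<mu> / n)\<^sup>2 * n * Bs \<le> m / (4 * K)"
      using common by (simp add: power2_eq_square)
    have lc: "\<bar>2 * (\<mu> / n) * n\<bar> \<le> 1/2" "\<bar>2 * (- \<mu> / n) * n\<bar> \<le> 1/2"
    proof -
      have e: "2 * (\<mu> / n) * n = 1 / K" using np by (simp add: \<mu>_def)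
      have e': "2 * (- \<mu> / n) * n = - (1 / K)" using np by (simp add: \<mu>_def)
      have K4: "K \<ge> 4" unfolding K_def by simp
      then have "1 / K \<le> 1 / 2" by (simp add: divide_le_eq)
      moreover have "1 / K > 0" using Kp by simp
      ultimately show "\<bar>2 * (\<mu> / n) * n\<bar> \<le> 1/2" "\<bar>2 * (- \<mu> / n) * n\<bar> \<le> 1/2"
        unfolding e e' by simp_all
    qed
    define U where "U = {a \<in> space (gaussian_sample d m). 9 * m * n / 4 \<le> S a}"
    define L where "L = {a \<in> space (gaussian_sample d m). S a \<le> m * n / 4}"
    have Um: "U \<in> sets (gaussian_sample d m)" unfolding U_def by measurable
    have Lm: "L \<in> sets (gaussian_sample d m)" unfolding L_def by measurable
    have mup: "\<mu> > 0" using Kp by (simp add: \<mu>_def)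
    have mU: "measure (gaussian_sample d m) U \<le> exp (- c * m)"
    proof (rule tail[OF Um, of "\<mu> / n" "9 * m * n / 4" x b])
      show "U \<subseteq> space (gaussian_sample d m)" unfolding U_def by auto
      show "\<mu> / n * (9 * m * n / 4) \<le> \<mu> / n * Ssum d m x b a" if "a \<in> U" for a
        using that mup np unfolding U_def S_def by (intro mult_left_mono) auto
      show "\<bar>2 * (\<mu> / n) * (\<Sum>k<d. (cmod (x k))\<^sup>2)\<bar> \<le> 1/2" using lc unfolding n_def by simp
      have e: "- (\<mu> / n * (9 * m * n / 4)) + \<mu> / n * m * n = - 5 * \<mu> * m / 4"
        using np by (simp add: field_simps)
      have "- (\<mu> / n * (9 * m * n / 4)) + (\<mu> / n * m * n + 4 * (\<mu> / n)\<^sup>2 * m * n\<^sup>2 + 8 * (\<mu> / n)\<^sup>2 * n * Bs)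
           \<le> - 5 * \<mu> * m / 4 + m / (4 * K)" using common e by linarith
      also have "\<dots> \<le> - c * m" unfolding \<mu>_def c_def using Kp m by (simp add: field_simps)
      finally show "- (\<mu> / n * (9 * m * n / 4)) + (\<mu> / n * m * (\<Sum>k<d. (cmod (x k))\<^sup>2) + 4 * (\<mu> / n)\<^sup>2 * m * (\<Sum>k<d. (cmod (x k))\<^sup>2)\<^sup>2
         + 8 * (\<mu> / n)\<^sup>2 * (\<Sum>k<d. (cmod (x k))\<^sup>2) * (\<Sum>j<m. (cmod (b j))\<^sup>2)) \<le> - c * m"
        unfolding n_def Bs_def .
    qed
    have mL: "measure (gaussian_sample d m) L \<le> exp (- c * m)"
    proof (rule tail[OF Lm, of "- \<mu> / n" "m * n / 4" x b])
      show "L \<subseteq> space (gaussian_sample d m)" unfolding L_def by auto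
      show "- \<mu> / n * (m * n / 4) \<le> - \<mu> / n * Ssum d m x b a" if "a \<in> L" for a
        using that mup np unfolding L_def S_def by (intro mult_left_mono_neg) auto
      show "\<bar>2 * (- \<mu> / n) * (\<Sum>k<d. (cmod (x k))\<^sup>2)\<bar> \<le> 1/2" using lc unfolding n_def by simp
      have e: "- (- \<mu> / n * (m * n / 4)) + - \<mu> / n * m * n = - 3 * \<mu> * m / 4"
        using np by (simp add: field_simps)
      have "- (- \<mu> / n * (m * n / 4)) + (- \<mu> / n * m * n + 4 * (- \<mu> / n)\<^sup>2 * m * n\<^sup>2 + 8 * (- \<mu> / n)\<^sup>2 * n * Bs)
           \<le> - 3 * \<mu> * m / 4 + m / (4 * K)" using common' e by linarith
      also have "\<dots> \<le> - c * m" unfolding \<mu>_def c_def using Kp m by (simp add: field_simps)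
      finally show "- (- \<mu> / n * (m * n / 4)) + (- \<mu> / n * m * (\<Sum>k<d. (cmod (x k))\<^sup>2) + 4 * (- \<mu> / n)\<^sup>2 * m * (\<Sum>k<d. (cmod (x k))\<^sup>2)\<^sup>2
         + 8 * (- \<mu> / n)\<^sup>2 * (\<Sum>k<d. (cmod (x k))\<^sup>2) * (\<Sum>j<m. (cmod (b j))\<^sup>2)) \<le> - c * m"
        unfolding n_def Bs_def .
    qed
    have sub: "space (gaussian_sample d m) - (U \<union> L) \<subseteq> Tset"
    proof
      fix a assume a: "a \<in> space (gaussian_sample d m) - (U \<union> L)"
      then have lo: "m * n / 4 < S a" and hi: "S a < 9 * m * n / 4" unfolding U_def L_def by auto
      have mp: "real m > 0" using m by simp
      have lo': "n / 4 \<le> S a / m" using lo mp by (simp add: field_simps)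
      have hi': "S a / m \<le> 9 * n / 4" using hi mp by (simp add: field_simps)
      have s4: "sqrt (n / 4) = sqrt n / 2" by (simp add: real_sqrt_divide)
      have s9: "sqrt (9 * n / 4) = 3 * sqrt n / 2"
      proof -
        have "sqrt (9 * n / 4) = sqrt 9 * sqrt n / 2" by (simp add: real_sqrt_divide real_sqrt_mult)
        moreover have "sqrt 9 = (3::real)" by (simp add: real_sqrt_unique)
        ultimately show ?thesis by simp
      qed
      have "sqrt n / 2 \<le> sqrt (S a / m)" using real_sqrt_le_mono[OF lo'] s4 by simp
      moreover have "sqrt (S a / m) \<le> 3 * sqrt n / 2" using real_sqrt_le_mono[OF hi'] s9 by simp
      ultimately show "a \<in> Tset" unfolding Tset_eq using a by auto
    qed
    have "1 - 4 * exp (- c * m) \<le> 1 - (measure (gaussian_sample d m) U + measure (gaussian_sample d m) L)"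
      using mU mL by (smt (verit) exp_gt_zero)
    also have "\<dots> \<le> 1 - measure (gaussian_sample d m) (U \<union> L)"
      using measure_Un_le[OF Um Lm] by simp
    also have "\<dots> = measure (gaussian_sample d m) (space (gaussian_sample d m) - (U \<union> L))"
      by (rule P.prob_compl[symmetric]) (use Um Lm in auto)
    also have "\<dots> \<le> measure (gaussian_sample d m) Tset"
      by (rule P.finite_measure_mono[OF sub Tm])
    finally show ?thesis unfolding goal_eq .
  qed
qed

theorem lemma1:
  fixes C0 :: real
  assumes "C0 > 0"
  shows "\<exists>c>0. \<forall>(d::nat) (m::nat) (x::nat \<Rightarrow> complex) (b::nat \<Rightarrow> complex).
           m > 0 \<longrightarrow> cnorm2 m b \<le> C0 * sqrt (real m) * cnorm2 d x \<longrightarrow>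
           measure (gaussian_sample d m)
             {a \<in> space (gaussian_sample d m).
                R0 d m x b a / 3 \<le> cnorm2 d x \<and> cnorm2 d x \<le> R0 d m x b a}
           \<ge> 1 - 4 * exp (- c * real m)"
proof (intro exI[of _ "1 / (8 * (4 + 8 * C0\<^sup>2))"] conjI allI impI)
  show "0 < 1 / (8 * (4 + 8 * C0\<^sup>2))" by (simp add: add_pos_nonneg)
next
  fix d m :: nat and x b :: "nat \<Rightarrow> complex"
  assume "m > 0" "cnorm2 m b \<le> C0 * sqrt (real m) * cnorm2 d x"
  then show "measure (gaussian_sample d m)
             {a \<in> space (gaussian_sample d m).
                R0 d m x b a / 3 \<le> cnorm2 d x \<and> cnorm2 d x \<le> R0 d m x b a}
           \<ge> 1 - 4 * exp (- (1 / (8 * (4 + 8 * C0\<^sup>2))) * real m)"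
    by (intro main_bound assms)
qed


end
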